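(* Let $4\le k\le\infty$ and let $\Gamma=(V,E)$ be a graph of girth $\geq 4$. Let $\widetilde\Gamma$ be the graph whose vertices are the pairs $(v,\sigma)$ with $v\in V$, $\sigma\in V\cup E$ and $v\subset\sigma$ (i.e. $\sigma=v$ or $\sigma$ is an edge containing $v$), where $(v,\sigma)$ and $(v',\sigma')$ are adjacent if either $v=v'$, or $v,v'$ are adjacent in $\Gamma$ and $\sigma\in\{v,vv'\}$, $\sigma'\in\{v',vv'\}$. Then the flag complex spanned on $\widetilde\Gamma$ is $k$-large if and only if $\Gamma$ has girth $\geq k$.
   Context: The flag complex spanned on a graph has a simplex for each finite clique. A cycle is a subcomplex that is a subdivision of the circle; it is full if every simplex spanned by its vertices lies in it. A flag complex is $k$-large if it has no full cycle of length $<k$. *)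

theory Defs
  imports Main "HOL-Library.Extended_Nat"
begin

definition graph :: "'a set \<Rightarrow> ('a \<Rightarrow> 'a \<Rightarrow> bool) \<Rightarrow> bool" where
  "graph V E \<longleftrightarrow> (\<forall>u v. E u v \<longrightarrow> u \<in> V \<and> v \<in> V \<and> u \<noteq> v \<and> E v u)"

definition is_cycle :: "'a set \<Rightarrow> ('a \<Rightarrow> 'a \<Rightarrow> bool) \<Rightarrow> 'a list \<Rightarrow> bool" where
  "is_cycle V E vs \<longleftrightarrow> distinct vs \<and> length vs \<ge> 3 \<and> set vs \<subseteq> V \<and>
     (\<forall>i < length vs. E (vs ! i) (vs ! ((i + 1) mod length vs)))"

definition girth_ge :: "'a set \<Rightarrow> ('a \<Rightarrow> 'a \<Rightarrow> bool) \<Rightarrow> enat \<Rightarrow> bool" where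
  "girth_ge V E k \<longleftrightarrow> (\<forall>vs. is_cycle V E vs \<longrightarrow> k \<le> enat (length vs))"

definition flag_complex :: "'a set \<Rightarrow> ('a \<Rightarrow> 'a \<Rightarrow> bool) \<Rightarrow> 'a set set" where
  "flag_complex V E = {S. finite S \<and> S \<noteq> {} \<and> S \<subseteq> V \<and>
       (\<forall>x\<in>S. \<forall>y\<in>S. x \<noteq> y \<longrightarrow> E x y)}"

definition cycle_subcomplex :: "'a list \<Rightarrow> 'a set set" where
  "cycle_subcomplex vs =
     {{vs ! i} | i. i < length vs} \<union> {{vs ! i, vs ! ((i + 1) mod length vs)} | i. i < length vs}"

definition full_cycle :: "'a set \<Rightarrow> ('a \<Rightarrow> 'a \<Rightarrow> bool) \<Rightarrow> 'a set set \<Rightarrow> nat \<Rightarrow> bool" where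
  "full_cycle V E C n \<longleftrightarrow> (\<exists>vs. is_cycle V E vs \<and> length vs = n \<and> C = cycle_subcomplex vs \<and>
       (\<forall>S \<in> flag_complex V E. S \<subseteq> set vs \<longrightarrow> S \<in> C))"

definition k_large :: "'a set \<Rightarrow> ('a \<Rightarrow> 'a \<Rightarrow> bool) \<Rightarrow> enat \<Rightarrow> bool" where
  "k_large V E k \<longleftrightarrow> (\<forall>C n. full_cycle V E C n \<longrightarrow> k \<le> enat n)"

definition tV :: "'a set \<Rightarrow> ('a \<Rightarrow> 'a \<Rightarrow> bool) \<Rightarrow> ('a \<times> 'a set) set" where
  "tV V E = {(v, \<sigma>). v \<in> V \<and> (\<sigma> = {v} \<or> (\<exists>w. E v w \<and> \<sigma> = {v, w}))}"

definition tE :: "'a set \<Rightarrow> ('a \<Rightarrow> 'a \<Rightarrow> bool) \<Rightarrow> ('a \<times> 'a set) \<Rightarrow> ('a \<times> 'a set) \<Rightarrow> bool" where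
  "tE V E p q \<longleftrightarrow> p \<in> tV V E \<and> q \<in> tV V E \<and> p \<noteq> q \<and>
     (fst p = fst q \<or>
      (E (fst p) (fst q) \<and> snd p \<in> {{fst p}, {fst p, fst q}} \<and> snd q \<in> {{fst q}, {fst p, fst q}}))"

end

theory Submission
  imports Defs
begin


definition cyc_edges :: "'b list \<Rightarrow> 'b set set" where
  "cyc_edges xs = {{xs!i, xs!((i+1) mod length xs)} | i. i < length xs}"

lemma mod_fact1: "(m + (i+1) mod n) mod (n::nat) = ((m+i) mod n + 1) mod n"
  by presburger

lemma mod_fact2: assumes "l < (n::nat)" shows "(m + (l + n - m mod n) mod n) mod n = l"
proof -
  have "m mod n < n" using assms by simp
  have "(m + (l + n - m mod n) mod n) mod n = (m + (l + n - m mod n)) mod n"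
    by (simp add: mod_add_right_eq)
  also have "m + (l + n - m mod n) = l + n + (m div n) * n"
    using \<open>m mod n < n\<close> div_mult_mod_eq[of m n] by linarith
  also have "(l + n + (m div n) * n) mod n = l" using assms by simp
  finally show ?thesis .
qed

lemma cyc_edges_rotate: "cyc_edges (rotate m xs) = cyc_edges xs"
proof (cases "xs = []")
  case True then show ?thesis by simp
next
  case False
  define n where "n = length xs"
  have n: "n > 0" using False n_def by simp
  show ?thesis
  proof
    show "cyc_edges (rotate m xs) \<subseteq> cyc_edges xs"
    proof
      fix e assume "e \<in> cyc_edges (rotate m xs)"
      then obtain i where i: "i < n" "e = {rotate m xs ! i, rotate m xs ! ((i+1) mod n)}"
        unfolding cyc_edges_def n_def by auto
      have r1: "rotate m xs ! i = xs ! ((m+i) mod n)" using i n_def by (simp add: nth_rotate)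
      have r2: "rotate m xs ! ((i+1) mod n) = xs ! (((m+i) mod n + 1) mod n)"
        using n n_def nth_rotate[of "(i+1) mod n" xs m] mod_fact1[of m i n] by simp
      have "e = {xs ! ((m+i) mod n), xs ! (((m+i) mod n + 1) mod n)}"
        using i r1 r2 by simp
      then show "e \<in> cyc_edges xs" unfolding cyc_edges_def n_def[symmetric]
        using n by auto
    qed
  next
    show "cyc_edges xs \<subseteq> cyc_edges (rotate m xs)"
    proof
      fix e assume "e \<in> cyc_edges xs"
      then obtain l where l: "l < n" "e = {xs ! l, xs ! ((l+1) mod n)}"
        unfolding cyc_edges_def n_def by auto
      define i where "i = (l + n - m mod n) mod n"
      have i: "i < n" unfolding i_def using n by (rule mod_less_divisor)
      have e1: "(m+i) mod n = l" unfolding i_def by (rule mod_fact2[OF l(1)])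
      have r1: "rotate m xs ! i = xs ! l"
        using nth_rotate[of i xs m] i e1 unfolding n_def by simp
      have m1: "(m + (i+1) mod n) mod n = (l + 1) mod n" using mod_fact1[of m i n] e1 by simp
      have "(i+1) mod n < n" using n by simp
      then have r2: "rotate m xs ! ((i+1) mod n) = xs ! ((l + 1) mod n)"
        using nth_rotate[of "(i+1) mod n" xs m] m1 unfolding n_def by simp
      have "e = {rotate m xs ! i, rotate m xs ! ((i+1) mod n)}"
        using l r1 r2 by simp
      moreover have "length (rotate m xs) = n" by (simp add: n_def)
      ultimately show "e \<in> cyc_edges (rotate m xs)" unfolding cyc_edges_def
        using i by blast
    qed
  qed
qed

definition contig :: "'b list \<Rightarrow> bool" where
  "contig xs \<longleftrightarrow> (\<forall>i j. i < j \<and> j < length xs \<and> xs!i = xs!j \<longrightarrow> j = Suc i)"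

lemma contig_tl: "contig (x # xs) \<Longrightarrow> contig xs"
  unfolding contig_def
proof (intro allI impI)
  fix i j assume a: "\<forall>i j. i < j \<and> j < length (x # xs) \<and> (x # xs) ! i = (x # xs) ! j \<longrightarrow> j = Suc i"
    and b: "i < j \<and> j < length xs \<and> xs ! i = xs ! j"
  then have "Suc j = Suc (Suc i)" using a[rule_format, of "Suc i" "Suc j"] by simp
  then show "j = Suc i" by simp
qed

lemma contig_distinct: "contig xs \<Longrightarrow> distinct (remdups_adj xs)"
proof (induction xs rule: remdups_adj.induct)
  case 1 then show ?case by simp
next
  case (2 x) then show ?case by simp
next
  case (3 x y xs)
  show ?case
  proof (cases "x = y")
    case True
    then show ?thesis using 3 contig_tl[of x "y # xs"] by simp
  next
    case False
    have ih: "distinct (remdups_adj (y # xs))" using 3 False contig_tl[of x "y # xs"] by simp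
    have "x \<notin> set (y # xs)"
    proof
      assume "x \<in> set (y # xs)"
      then obtain t where t: "t < length (y # xs)" "(y # xs) ! t = x" by (meson in_set_conv_nth)
      then have "(x # y # xs) ! 0 = (x # y # xs) ! Suc t" "Suc t < length (x # y # xs)" by auto
      then have "Suc t = Suc 0" using 3(3) unfolding contig_def by blast
      then show False using t False by simp
    qed
    then show ?thesis using ih False by simp
  qed
qed

lemma graphD: "graph V E \<Longrightarrow> E u v \<Longrightarrow> u \<in> V \<and> v \<in> V \<and> u \<noteq> v \<and> E v u"
  unfolding graph_def by blast

lemma tE_sym: "graph V E \<Longrightarrow> tE V E p q \<Longrightarrow> tE V E q p"
  unfolding tE_def using graphD[of V E "fst p" "fst q"] by (auto simp: insert_commute)

lemma tE_fst: "tE V E p q \<Longrightarrow> fst p \<noteq> fst q \<Longrightarrow> E (fst p) (fst q)"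
  unfolding tE_def by auto

lemma tE_same: "p \<in> tV V E \<Longrightarrow> q \<in> tV V E \<Longrightarrow> p \<noteq> q \<Longrightarrow> fst p = fst q \<Longrightarrow> tE V E p q"
  unfolding tE_def by auto

lemma tE_tV: "tE V E p q \<Longrightarrow> p \<in> tV V E \<and> q \<in> tV V E \<and> p \<noteq> q"
  unfolding tE_def by auto

lemma tV_fst: "p \<in> tV V E \<Longrightarrow> fst p \<in> V"
  unfolding tV_def by auto

lemma subcomplex_card: "S \<in> cycle_subcomplex vs \<Longrightarrow> card S \<le> 2"
  unfolding cycle_subcomplex_def by (auto simp: card_insert_if)

lemma triangle_cycle:
  assumes "distinct [a,b,c]" "a \<in> V" "b \<in> V" "c \<in> V" "E a b" "E b c" "E c a"
  shows "is_cycle V E [a,b,c]"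
proof -
  have "\<forall>i<3. E ([a,b,c] ! i) ([a,b,c] ! ((i + 1) mod 3))"
  proof (intro allI impI)
    fix i :: nat assume "i < 3"
    then have "i = 0 \<or> i = 1 \<or> i = 2" by auto
    then show "E ([a,b,c] ! i) ([a,b,c] ! ((i + 1) mod 3))" using assms by auto
  qed
  then show ?thesis unfolding is_cycle_def using assms by simp
qed

lemma no_triangle:
  assumes "girth_ge V E 4" "graph V E" "E a b" "E b c" "E c a" "a \<noteq> c"
  shows False
proof -
  have "is_cycle V E [a,b,c]" using triangle_cycle[of a b c V E] assms graphD[OF assms(2)] by auto
  then have "(4::enat) \<le> enat 3" using assms(1) unfolding girth_ge_def by fastforce
  then show False by (simp add: numeral_eq_enat)
qed

lemma min_cycle_chordless:
  assumes g: "graph V E" and cyc: "is_cycle V E cs"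
    and mn: "\<And>ds. is_cycle V E ds \<Longrightarrow> length cs \<le> length ds"
    and ij: "i < j" "j < length cs" and e: "E (cs ! i) (cs ! j)"
  shows "j = Suc i \<or> (i = 0 \<and> j = length cs - 1)"
proof (rule ccontr)
  assume nc: "\<not> (j = Suc i \<or> (i = 0 \<and> j = length cs - 1))"
  define L where "L = length cs"
  define ds where "ds = take (j + 1 - i) (drop i cs)"
  have ld: "length ds = j + 1 - i" unfolding ds_def using ij by simp
  have dn: "\<And>t. t < j + 1 - i \<Longrightarrow> ds ! t = cs ! (i + t)"
    unfolding ds_def using ij by simp
  have cE: "\<And>t. t < L \<Longrightarrow> E (cs ! t) (cs ! ((t + 1) mod L))"
    using cyc unfolding is_cycle_def L_def by blast
  have "is_cycle V E ds"
    unfolding is_cycle_def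
  proof (intro conjI)
    show "distinct ds" unfolding ds_def using cyc unfolding is_cycle_def by simp
    have "j \<noteq> Suc i" using nc by blast
    then show "3 \<le> length ds" using ld ij by linarith
    show "set ds \<subseteq> V" unfolding ds_def using cyc unfolding is_cycle_def
      by (meson in_set_dropD in_set_takeD subset_iff)
    show "\<forall>t<length ds. E (ds ! t) (ds ! ((t + 1) mod length ds))"
    proof (intro allI impI)
      fix t assume t: "t < length ds"
      show "E (ds ! t) (ds ! ((t + 1) mod length ds))"
      proof (cases "t + 1 < length ds")
        case True
        then have "(t + 1) mod length ds = t + 1" by simp
        moreover have "(i + t + 1) mod L = i + t + 1" using True ld ij L_def by simp
        moreover have "i + t < L" using True ld ij L_def by simp
        ultimately show ?thesis using dn[of t] dn[of "t+1"] True ld cE[of "i+t"] by simp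
      next
        case False
        then have "t + 1 = length ds" using t by simp
        then have "(t + 1) mod length ds = 0" by simp
        moreover have "i + t = j" using \<open>t + 1 = length ds\<close> ld ij by linarith
        moreover have "ds ! t = cs ! (i + t)" using dn[of t] t ld by simp
        moreover have "ds ! 0 = cs ! i" using dn[of 0] ld ij by simp
        ultimately show ?thesis using graphD[OF g e] by simp
      qed
    qed
  qed
  then have "L \<le> j + 1 - i" using mn ld L_def by fastforce
  then show False using nc ij L_def by linarith
qed

lemma dir1:
  assumes g: "graph V E" and g4: "girth_ge V E 4" and kl: "k_large (tV V E) (tE V E) k"
  shows "girth_ge V E k"
  unfolding girth_ge_def
proof (intro allI impI)
  fix vs assume vs: "is_cycle V E vs"
  define P where "P = (\<lambda>m. \<exists>cs. is_cycle V E cs \<and> length cs = m)"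
  have "P (length vs)" using vs P_def by blast
  then have "P (LEAST m. P m)" by (rule LeastI)
  then obtain cs where cs: "is_cycle V E cs" "length cs = (LEAST m. P m)" using P_def by blast
  have mn: "\<And>ds. is_cycle V E ds \<Longrightarrow> length cs \<le> length ds"
    using cs(2) P_def by (metis Least_le)
  have le: "length cs \<le> length vs" using mn vs by blast
  define L where "L = length cs"
  have L3: "L \<ge> 3" using cs unfolding is_cycle_def L_def by simp
  have csV: "set cs \<subseteq> V" using cs unfolding is_cycle_def by simp
  have csd: "distinct cs" using cs unfolding is_cycle_def by simp
  have cE: "\<And>t. t < L \<Longrightarrow> E (cs ! t) (cs ! ((t + 1) mod L))"
    using cs unfolding is_cycle_def L_def by blast
  define ts where "ts = map (\<lambda>u. (u, {u})) cs"
  have lts: "length ts = L" unfolding ts_def L_def by simp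
  have tsn: "\<And>t. t < L \<Longrightarrow> ts ! t = (cs ! t, {cs ! t})" unfolding ts_def L_def by simp
  have tsV: "set ts \<subseteq> tV V E" unfolding ts_def tV_def using csV by auto
  have tEts: "\<And>u v. E u v \<Longrightarrow> tE V E (u,{u}) (v,{v})"
    unfolding tE_def tV_def using graphD[OF g] by auto
  have tEts2: "\<And>u v. tE V E (u,{u}) (v,{v}) \<Longrightarrow> E u v"
    unfolding tE_def by auto
  have cyc: "is_cycle (tV V E) (tE V E) ts"
    unfolding is_cycle_def
  proof (intro conjI)
    show "distinct ts" unfolding ts_def using csd by (simp add: distinct_map inj_on_def)
    show "3 \<le> length ts" using lts L3 by simp
    show "set ts \<subseteq> tV V E" by (rule tsV)
    show "\<forall>i<length ts. tE V E (ts ! i) (ts ! ((i + 1) mod length ts))"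
      using tsn cE tEts lts L3 by simp
  qed
  have chord: "\<And>a b. a < L \<Longrightarrow> b < L \<Longrightarrow> tE V E (ts ! a) (ts ! b) \<Longrightarrow>
      \<exists>i<L. {ts ! a, ts ! b} = {ts ! i, ts ! ((i + 1) mod L)}"
  proof -
    fix a b assume ab: "a < L" "b < L" "tE V E (ts ! a) (ts ! b)"
    then have e: "E (cs ! a) (cs ! b)" using tsn tEts2 by simp
    then have "cs ! a \<noteq> cs ! b" using graphD[OF g] by blast
    then have "a \<noteq> b" by blast
    have sym: "E (cs ! b) (cs ! a)" using graphD[OF g e] by blast
    have L1: "(L - 1 + 1) mod L = 0" using L3 by simp
    show "\<exists>i<L. {ts ! a, ts ! b} = {ts ! i, ts ! ((i + 1) mod L)}"
    proof (cases "a < b")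
      case True
      then have "b = Suc a \<or> (a = 0 \<and> b = L - 1)"
        using min_cycle_chordless[OF g cs(1) mn True] ab e L_def by simp
      then show ?thesis
      proof
        assume "b = Suc a" then show ?thesis using ab by (intro exI[of _ a]) simp
      next
        assume "a = 0 \<and> b = L - 1" then show ?thesis using ab L1 L3
          by (intro exI[of _ "L - 1"]) (auto simp: insert_commute)
      qed
    next
      case False
      then have ba: "b < a" using \<open>a \<noteq> b\<close> by simp
      then have "a = Suc b \<or> (b = 0 \<and> a = L - 1)"
        using min_cycle_chordless[OF g cs(1) mn ba] ab sym L_def by simp
      then show ?thesis
      proof
        assume "a = Suc b" then show ?thesis using ab by (intro exI[of _ b]) (auto simp: insert_commute)
      next
        assume "b = 0 \<and> a = L - 1" then show ?thesis using ab L1 L3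
          by (intro exI[of _ "L - 1"]) (auto simp: insert_commute)
      qed
    qed
  qed
  have full: "\<forall>S \<in> flag_complex (tV V E) (tE V E). S \<subseteq> set ts \<longrightarrow> S \<in> cycle_subcomplex ts"
  proof (intro ballI impI)
    fix S assume S: "S \<in> flag_complex (tV V E) (tE V E)" and Sts: "S \<subseteq> set ts"
    have ne: "S \<noteq> {}" and cl: "\<And>x y. x \<in> S \<Longrightarrow> y \<in> S \<Longrightarrow> x \<noteq> y \<Longrightarrow> tE V E x y"
      using S unfolding flag_complex_def by auto
    obtain p where p: "p \<in> S" using ne by blast
    obtain a where a: "a < L" "p = ts ! a" using p Sts lts by (metis in_set_conv_nth subsetD)
    show "S \<in> cycle_subcomplex ts"
    proof (cases "S = {p}")
      case True
      then show ?thesis unfolding cycle_subcomplex_def using a lts by auto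
    next
      case False
      then obtain q where q: "q \<in> S" "q \<noteq> p" using p by blast
      obtain b where b: "b < L" "q = ts ! b" using q Sts lts by (metis in_set_conv_nth subsetD)
      have form: "\<And>x. x \<in> S \<Longrightarrow> \<exists>u. x = (u, {u})" using Sts unfolding ts_def by auto
      have SE: "E (fst x) (fst y)" if xy: "x \<in> S" "y \<in> S" "x \<noteq> y" for x y
      proof -
        obtain u where u: "x = (u, {u})" using form[OF xy(1)] by blast
        obtain v where v: "y = (v, {v})" using form[OF xy(2)] by blast
        have "tE V E (u,{u}) (v,{v})" using cl[OF xy] u v by simp
        then show ?thesis using tEts2 u v by simp
      qed
      have Spq: "S = {p, q}"
      proof
        show "{p, q} \<subseteq> S" using p q by simp
        show "S \<subseteq> {p, q}"
        proof
          fix r assume r: "r \<in> S"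
          show "r \<in> {p, q}"
          proof (rule ccontr)
            assume "r \<notin> {p, q}"
            then have "E (fst p) (fst q)" "E (fst q) (fst r)" "E (fst r) (fst p)"
              using SE[of p q] SE[of q r] SE[of r p] p q r \<open>r \<notin> {p, q}\<close> by auto
            moreover have "fst p \<noteq> fst r" using form[OF p] form[OF r] \<open>r \<notin> {p, q}\<close> by auto
            ultimately show False using no_triangle[OF g4 g] by blast
          qed
        qed
      qed
      obtain i where i: "i < L" "{ts ! a, ts ! b} = {ts ! i, ts ! ((i + 1) mod L)}"
        using chord[OF a(1) b(1)] cl p q a b by metis
      show ?thesis unfolding cycle_subcomplex_def using Spq a b i lts by auto
    qed
  qed
  have "full_cycle (tV V E) (tE V E) (cycle_subcomplex ts) L"
    unfolding full_cycle_def using cyc lts full by blast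
  then have "k \<le> enat L" using kl unfolding k_large_def by blast
  then show "k \<le> enat (length vs)" using le L_def by (meson enat_ord_simps(1) order_trans)
qed

lemma dir2:
  assumes g: "graph V E" and gk: "girth_ge V E k"
  shows "k_large (tV V E) (tE V E) k"
  unfolding k_large_def
proof (intro allI impI)
  fix C n assume "full_cycle (tV V E) (tE V E) C n"
  then obtain vs where cyc: "is_cycle (tV V E) (tE V E) vs" and ln: "length vs = n"
    and Cdef: "C = cycle_subcomplex vs"
    and full: "\<forall>S \<in> flag_complex (tV V E) (tE V E). S \<subseteq> set vs \<longrightarrow> S \<in> C"
    unfolding full_cycle_def by blast
  have dvs: "distinct vs" and n3: "n \<ge> 3" and vsV: "set vs \<subseteq> tV V E"
    and vE: "\<And>i. i < n \<Longrightarrow> tE V E (vs ! i) (vs ! ((i + 1) mod n))"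
    using cyc ln unfolding is_cycle_def by auto
  have cardn: "card (set vs) = n" using dvs ln distinct_card by blast
  have cliq: "card S \<le> 2" if "S \<subseteq> set vs" "S \<noteq> {}"
      "\<And>x y. x \<in> S \<Longrightarrow> y \<in> S \<Longrightarrow> x \<noteq> y \<Longrightarrow> tE V E x y" for S
  proof -
    have "finite S" using that(1) finite_subset by blast
    then have "S \<in> flag_complex (tV V E) (tE V E)" unfolding flag_complex_def
      using that vsV by blast
    then have "S \<in> C" using full that(1) by blast
    then show ?thesis using Cdef subcomplex_card by blast
  qed
  have edge: "{p, q} \<in> cyc_edges vs" if "p \<in> set vs" "q \<in> set vs" "tE V E p q" for p q
  proof -
    have pq: "p \<noteq> q" using tE_tV[OF that(3)] by blast
    have "{p, q} \<in> flag_complex (tV V E) (tE V E)" unfolding flag_complex_def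
      using that vsV tE_sym[OF g that(3)] by auto
    then have "{p, q} \<in> C" using full that by auto
    then show ?thesis using pq unfolding Cdef cycle_subcomplex_def cyc_edges_def
      by (auto simp: doubleton_eq_iff)
  qed
  have n4: "n \<ge> 4"
  proof (rule ccontr)
    assume "\<not> n \<ge> 4"
    then have n3': "n = 3" using n3 by simp
    have e01: "tE V E (vs!0) (vs!1)" using vE[of 0] n3' by simp
    have e12: "tE V E (vs!1) (vs!2)" using vE[of 1] n3' by (simp add: numeral_2_eq_2)
    have e20: "tE V E (vs!2) (vs!0)" using vE[of 2] n3' by simp
    have "set vs = {vs!0, vs!1, vs!2}" using ln n3'
      by (auto simp: in_set_conv_nth less_Suc_eq numeral_3_eq_3 numeral_2_eq_2)
    have "card (set vs) \<le> 2"
    proof (rule cliq)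
      show "set vs \<subseteq> set vs" by simp
      show "set vs \<noteq> {}" using n3 ln by auto
      fix x y assume "x \<in> set vs" "y \<in> set vs" "x \<noteq> y"
      then show "tE V E x y" using \<open>set vs = {vs!0, vs!1, vs!2}\<close> e01 e12 e20
        tE_sym[OF g e01] tE_sym[OF g e12] tE_sym[OF g e20] by auto
    qed
    then show False using cardn n3' by simp
  qed
  have fib: "card {p \<in> set vs. fst p = u} \<le> 2" for u
  proof (cases "{p \<in> set vs. fst p = u} = {}")
    case True then show ?thesis by (simp only: True card.empty)
  next
    case False
    show ?thesis
    proof (rule cliq)
      show "{p \<in> set vs. fst p = u} \<subseteq> set vs" by blast
      show "{p \<in> set vs. fst p = u} \<noteq> {}" by (rule False)
      fix x y assume "x \<in> {p \<in> set vs. fst p = u}" "y \<in> {p \<in> set vs. fst p = u}" "x \<noteq> y"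
      then show "tE V E x y" using vsV tE_same[of x V E y] by auto
    qed
  qed
  obtain j0 where j0: "j0 < n" "fst (vs ! j0) \<noteq> fst (vs ! ((j0 + 1) mod n))"
  proof (rule ccontr)
    assume "\<not> thesis"
    then have allq: "\<And>j. j < n \<Longrightarrow> fst (vs ! j) = fst (vs ! ((j + 1) mod n))" using that by blast
    have "\<And>i. i < n \<Longrightarrow> fst (vs ! i) = fst (vs ! 0)"
    proof -
      fix i show "i < n \<Longrightarrow> fst (vs ! i) = fst (vs ! 0)"
      proof (induction i)
        case 0 then show ?case by simp
      next
        case (Suc i)
        then have "fst (vs ! i) = fst (vs ! ((i + 1) mod n))" using allq[of i] by simp
        then show ?case using Suc by simp
      qed
    qed
    then have "set vs \<subseteq> {p \<in> set vs. fst p = fst (vs ! 0)}" using ln by (metis (mono_tags, lifting) in_set_conv_nth mem_Collect_eq subsetI)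
    then have "card (set vs) \<le> 2" using fib[of "fst (vs ! 0)"] card_mono[of "{p \<in> set vs. fst p = fst (vs ! 0)}" "set vs"]
      by auto
    then show False using cardn n4 by simp
  qed
  define vs' where "vs' = rotate (Suc j0) vs"
  have ln': "length vs' = n" and dvs': "distinct vs'" and set': "set vs' = set vs"
    and ce': "cyc_edges vs' = cyc_edges vs"
    unfolding vs'_def using ln dvs cyc_edges_rotate[of "Suc j0" vs] by (simp_all del: rotate_Suc)
  have v0: "vs' ! 0 = vs ! ((Suc j0) mod n)" unfolding vs'_def using nth_rotate[of 0 vs "Suc j0"] ln n4 by (simp del: rotate_Suc)
  have "Suc j0 + (n - 1) = j0 + n" using n4 by simp
  then have "(Suc j0 + (n - 1)) mod n = j0" using j0(1) by simp
  then have vl: "vs' ! (n - 1) = vs ! j0" unfolding vs'_def using nth_rotate[of "n-1" vs "Suc j0"] ln n4 by (simp del: rotate_Suc)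
  have fne: "fst (vs' ! 0) \<noteq> fst (vs' ! (n - 1))" using v0 vl j0(2) by simp
  have cycE: "\<exists>p q. e = {p, q} \<and> tE V E p q" if "e \<in> cyc_edges vs" for e
    using that vE ln unfolding cyc_edges_def by blast
  have vE': "tE V E (vs' ! i) (vs' ! ((i + 1) mod n))" if "i < n" for i
  proof -
    have "{vs' ! i, vs' ! ((i + 1) mod n)} \<in> cyc_edges vs'" unfolding cyc_edges_def using that ln' by auto
    then obtain p q where pq: "{vs' ! i, vs' ! ((i + 1) mod n)} = {p, q}" "tE V E p q" using cycE ce' by blast
    have "tE V E q p" using tE_sym[OF g pq(2)] .
    then show ?thesis using pq by (auto simp: doubleton_eq_iff)
  qed
  have F1: "b = Suc a \<or> (a = 0 \<and> b = n - 1)" if ab: "a < b" "b < n" "tE V E (vs' ! a) (vs' ! b)" for a b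
  proof -
    have "vs' ! a \<in> set vs" "vs' ! b \<in> set vs" using ab set' ln' by (metis nth_mem order.strict_trans)+
    then have "{vs' ! a, vs' ! b} \<in> cyc_edges vs'" using edge ab ce' by simp
    then obtain l where l: "l < n" "{vs' ! a, vs' ! b} = {vs' ! l, vs' ! ((l + 1) mod n)}"
      unfolding cyc_edges_def using ln' by auto
    have ml: "(l + 1) mod n < n" using n4 by simp
    have a_n: "a < n" using ab by simp
    have bn: "b < n" using ab by simp
    have inj: "\<And>x y. x < n \<Longrightarrow> y < n \<Longrightarrow> vs' ! x = vs' ! y \<longleftrightarrow> x = y"
      using dvs' ln' nth_eq_iff_index_eq by metis
    have "(vs' ! a = vs' ! l \<and> vs' ! b = vs' ! ((l + 1) mod n)) \<or>
          (vs' ! a = vs' ! ((l + 1) mod n) \<and> vs' ! b = vs' ! l)"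
      using l(2) by (simp add: doubleton_eq_iff)
    then have eqs: "(a = l \<and> b = (l + 1) mod n) \<or> (a = (l + 1) mod n \<and> b = l)"
      using inj[OF a_n l(1)] inj[OF bn ml] inj[OF a_n ml] inj[OF bn l(1)] by blast
    show ?thesis
    proof (cases "l + 1 < n")
      case True
      then have "(l + 1) mod n = l + 1" by simp
      then show ?thesis using eqs ab by auto
    next
      case False
      then have "l + 1 = n" using l(1) by simp
      then have "l = n - 1" "(l + 1) mod n = 0" by auto
      then show ?thesis using eqs ab by auto
    qed
  qed
  define ws where "ws = map fst vs'"
  have lws: "length ws = n" unfolding ws_def using ln' by simp
  have wsn: "\<And>i. i < n \<Longrightarrow> ws ! i = fst (vs' ! i)" unfolding ws_def using ln' by simp
  have vs'V: "\<And>i. i < n \<Longrightarrow> vs' ! i \<in> tV V E" using set' vsV ln' nth_mem by blast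
  have ctg: "contig ws" unfolding contig_def
  proof (intro allI impI)
    fix i j assume a: "i < j \<and> j < length ws \<and> ws ! i = ws ! j"
    then have "vs' ! i \<noteq> vs' ! j" using dvs' ln' lws by (simp add: nth_eq_iff_index_eq)
    moreover have "fst (vs' ! i) = fst (vs' ! j)" using a wsn[of i] wsn[of j] lws by auto
    moreover have "i < n" "j < n" using a lws by auto
    ultimately have "tE V E (vs' ! i) (vs' ! j)" using tE_same[OF vs'V vs'V] by blast
    then have "j = Suc i \<or> (i = 0 \<and> j = n - 1)" using F1 a lws by simp
    moreover have "\<not> (i = 0 \<and> j = n - 1)"
    proof
      assume h: "i = 0 \<and> j = n - 1"
      then have "ws ! 0 = ws ! (n - 1)" using a by simp
      moreover have "ws ! 0 = fst (vs' ! 0)" "ws ! (n - 1) = fst (vs' ! (n - 1))"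
        using wsn[of 0] wsn[of "n - 1"] n4 by auto
      ultimately show False using fne by simp
    qed
    ultimately show "j = Suc i" by blast
  qed
  have succ: "successively (\<lambda>x y. x = y \<or> E x y) ws"
    unfolding successively_conv_nth
  proof (intro allI impI)
    fix i assume "Suc i < length ws"
    then have "tE V E (vs' ! i) (vs' ! Suc i)" using vE'[of i] lws by simp
    then show "ws ! i = ws ! Suc i \<or> E (ws ! i) (ws ! Suc i)"
      using tE_fst[of V E "vs' ! i" "vs' ! Suc i"] wsn[of i] wsn[of "Suc i"] lws \<open>Suc i < length ws\<close> by auto
  qed
  define ys where "ys = remdups_adj ws"
  have dys: "distinct ys" unfolding ys_def using contig_distinct[OF ctg] .
  have succE: "E (ys ! i) (ys ! Suc i)" if "Suc i < length ys" for i
  proof -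
    have s2: "successively (\<lambda>x y. x = y \<or> E x y) ys"
      unfolding ys_def by (rule successively_remdups_adjI[OF succ])
    have "ys ! i = ys ! Suc i \<or> E (ys ! i) (ys ! Suc i)"
      using successively_nth[OF s2 that] by simp
    moreover have "ys ! i \<noteq> ys ! Suc i" using remdups_adj_adjacent[of i ws] that unfolding ys_def by simp
    ultimately show ?thesis by simp
  qed
  have wsne: "ws \<noteq> []" using lws n4 by auto
  have hdw: "hd ws = fst (vs' ! 0)" using wsn[of 0] n4 hd_conv_nth[OF wsne] by simp
  have lastw: "last ws = fst (vs' ! (n - 1))" using wsn[of "n-1"] n4 last_conv_nth[OF wsne] lws by simp
  have wrapE: "E (last ws) (hd ws)"
  proof -
    have "tE V E (vs' ! (n - 1)) (vs' ! 0)" using vE'[of "n-1"] n4 by simp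
    then have "E (fst (vs' ! (n - 1))) (fst (vs' ! 0))" using tE_fst fne by metis
    then show ?thesis using hdw lastw by simp
  qed
  have setys: "set ys = fst ` set vs" unfolding ys_def ws_def using set' by simp
  have lys_le: "length ys \<le> n" unfolding ys_def using remdups_adj_length[of ws] lws by simp
  have lys3: "length ys \<ge> 3"
  proof (rule ccontr)
    assume "\<not> length ys \<ge> 3"
    then have cs2: "card (set ws) \<le> 2" using distinct_card[OF dys] unfolding ys_def by simp
    define u where "u = hd ws"
    define w where "w = last ws"
    have uw: "u \<noteq> w" using fne hdw lastw u_def w_def by simp
    have "u \<in> set ws" "w \<in> set ws" using wsne u_def w_def by auto
    then have "{u, w} \<subseteq> set ws" by simp
    moreover have "card (set ws) \<le> card {u, w}" using cs2 uw by simp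
    ultimately have sw: "set ws = {u, w}" using card_seteq[of "set ws" "{u, w}"] by simp
    have fsv: "fst ` set vs = {u, w}" using sw set' unfolding ws_def by simp
    have "set vs \<subseteq> {p \<in> set vs. fst p = u} \<union> {p \<in> set vs. fst p = w}" using fsv by auto
    then have "card (set vs) \<le> card ({p \<in> set vs. fst p = u} \<union> {p \<in> set vs. fst p = w})"
      by (intro card_mono) auto
    also have "\<dots> \<le> card {p \<in> set vs. fst p = u} + card {p \<in> set vs. fst p = w}" by (rule card_Un_le)
    also have "\<dots> \<le> 4" using fib[of u] fib[of w] by simp
    finally have n4': "n = 4" using cardn n4 by simp
    have w0: "ws ! 0 = u" using hd_conv_nth[OF wsne] u_def by simp
    have w3: "ws ! 3 = w" using last_conv_nth[OF wsne] w_def lws n4' by simp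
    have l12: "1 < length ws" "2 < length ws" using lws n4' by auto
    have w1m: "ws ! 1 \<in> {u, w}" "ws ! 2 \<in> {u, w}"
      using nth_mem[OF l12(1)] nth_mem[OF l12(2)] unfolding sw by blast+
    have ctg': "j = Suc i" if "i < j" "j < 4" "ws ! i = ws ! j" for i j
    proof -
      have "i < j \<and> j < length ws \<and> ws ! i = ws ! j" using that lws n4' by simp
      then show ?thesis using ctg unfolding contig_def by blast
    qed
    have w1: "ws ! 1 = u"
    proof (rule ccontr)
      assume "ws ! 1 \<noteq> u" then have "ws ! 1 = ws ! 3" using w1m w3 by auto
      then show False using ctg'[of 1 3] by simp
    qed
    have w2: "ws ! 2 = w"
    proof (rule ccontr)
      assume "ws ! 2 \<noteq> w" then have "ws ! 0 = ws ! 2" using w1m w0 by auto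
      then show False using ctg'[of 0 2] by simp
    qed
    define a where "a = vs' ! 0"
    define b where "b = vs' ! 1"
    define c where "c = vs' ! 2"
    define d where "d = vs' ! 3"
    have fa: "fst a = u" using w0 wsn[of 0] n4' a_def by simp
    have fb: "fst b = u" using w1 wsn[of 1] n4' b_def by simp
    have fc: "fst c = w" using w2 wsn[of 2] n4' c_def by simp
    have fd: "fst d = w" using w3 wsn[of 3] n4' d_def by simp
    have ebc: "tE V E b c" using vE'[of 1] n4' b_def c_def by (simp add: numeral_2_eq_2)
    have eda: "tE V E d a" using vE'[of 3] n4' a_def d_def by simp
    have ab: "a \<noteq> b" "a \<noteq> c" "b \<noteq> c" unfolding a_def b_def c_def
      using dvs' ln' n4' by (simp_all add: nth_eq_iff_index_eq)
    have inV: "a \<in> tV V E" "b \<in> tV V E" "c \<in> tV V E" using vs'V n4' a_def b_def c_def by auto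
    have h1: "fst b = fst c \<or> (E (fst b) (fst c) \<and> snd b \<in> {{fst b}, {fst b, fst c}} \<and> snd c \<in> {{fst c}, {fst b, fst c}})"
      using ebc unfolding tE_def by blast
    then have h1': "E (fst b) (fst c) \<and> snd c \<in> {{fst c}, {fst b, fst c}}" using fb fc uw by blast
    then have Euw: "E u w" and sc: "snd c \<in> {{w}, {u, w}}" using fb fc by simp_all
    have h2: "fst d = fst a \<or> (E (fst d) (fst a) \<and> snd d \<in> {{fst d}, {fst d, fst a}} \<and> snd a \<in> {{fst a}, {fst d, fst a}})"
      using eda unfolding tE_def by blast
    moreover have "fst d \<noteq> fst a" using fa fd uw by simp
    ultimately have "snd a \<in> {{fst a}, {fst d, fst a}}" by argo
    then have sa: "snd a \<in> {{u}, {u, w}}" using fa fd by (simp add: insert_commute)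
    have "E (fst a) (fst c) \<and> snd a \<in> {{fst a}, {fst a, fst c}} \<and> snd c \<in> {{fst c}, {fst a, fst c}}"
      using Euw sc sa fa fc by simp
    then have eac: "tE V E a c" unfolding tE_def using inV(1) inV(3) ab(2) by blast
    have eab: "tE V E a b" using tE_same[OF inV(1) inV(2) ab(1)] fa fb by simp
    have "card {a, b, c} \<le> 2"
    proof (rule cliq)
      have "a \<in> set vs'" "b \<in> set vs'" "c \<in> set vs'" using ln' n4' a_def b_def c_def nth_mem by auto
      then show "{a, b, c} \<subseteq> set vs" using set' by auto
      show "{a, b, c} \<noteq> {}" by simp
      fix x y assume "x \<in> {a, b, c}" "y \<in> {a, b, c}" "x \<noteq> y"
      then show "tE V E x y" using eac eab ebc tE_sym[OF g eac] tE_sym[OF g eab] tE_sym[OF g ebc] by blast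
    qed
    then show False using ab by simp
  qed
  have ysne: "ys \<noteq> []" using lys3 by auto
  have "is_cycle V E ys" unfolding is_cycle_def
  proof (intro conjI)
    show "distinct ys" by (rule dys)
    show "3 \<le> length ys" by (rule lys3)
    show "set ys \<subseteq> V"
    proof
      fix x assume "x \<in> set ys"
      then obtain p where p: "p \<in> set vs" "x = fst p" using setys by auto
      have "p \<in> tV V E" using vsV p(1) by blast
      then show "x \<in> V" using p(2) tV_fst by simp
    qed
    show "\<forall>i<length ys. E (ys ! i) (ys ! ((i + 1) mod length ys))"
    proof (intro allI impI)
      fix i assume i: "i < length ys"
      show "E (ys ! i) (ys ! ((i + 1) mod length ys))"
      proof (cases "Suc i < length ys")
        case True then show ?thesis using succE by simp
      next
        case False
        then have "i + 1 = length ys" using i by simp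
        then have "i = length ys - 1" "(i + 1) mod length ys = 0" by auto
        moreover have "ys ! (length ys - 1) = last ws" using last_conv_nth[OF ysne] unfolding ys_def by simp
        moreover have "ys ! 0 = hd ws" using hd_conv_nth[OF ysne] unfolding ys_def by simp
        ultimately show ?thesis using wrapE by simp
      qed
    qed
  qed
  then have "k \<le> enat (length ys)" using gk unfolding girth_ge_def by blast
  then show "k \<le> enat n" using lys_le by (meson enat_ord_simps(1) order_trans)
qed


theorem lemma2p9:
  fixes V :: "'a set" and E :: "'a \<Rightarrow> 'a \<Rightarrow> bool" and k :: enat
  assumes "graph V E"
    and "4 \<le> k"
    and "girth_ge V E 4"
  shows "k_large (tV V E) (tE V E) k \<longleftrightarrow> girth_ge V E k"
  using dir1[OF assms(1) assms(3)] dir2[OF assms(1)] by blast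

end
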